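(* Let $A=(A,\wedge,\vee,\cdot,\to,1)$ be a $\mathsf{DLCMI}$, $a,b\in A$, and $(c,d),(u,w)\in R(a,b)$. Then there are natural numbers $n,k$ such that: 1) $t_n^{2k}(a,b)\cdot(c\to u)\le d\to w$; 2) $t_n^{2k}(a,b)\cdot((c\to u)\wedge a\wedge b)\le (d\to w)\wedge a\wedge b$; 3) $t_n^{2k}(a,b)\cdot((d\to w)\wedge a\wedge b)\le (c\to u)\wedge a\wedge b$; 4) $t_n^{2k}(a,b)\cdot((c\to u)\vee a\vee b)\le (d\to w)\vee a\vee b$; 5) $t_n^{2k}(a,b)\cdot((d\to w)\vee a\vee b)\le (c\to u)\vee a\vee b$; 6) $t_{n+1}^{2k}(a,b)\le (c\to u)\leftrightarrow(d\to w)$.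
   Context: An algebra $(A,\wedge,\vee,\cdot,\to,1)$ of type $(2,2,2,2,0)$ is a $\mathsf{DLCMI}$ if for all $a,b,c\in A$: (1) $(A,\wedge,\vee)$ is a distributive lattice; (2) $1$ is its largest element; (3) $(A,\cdot,1)$ is a commutative monoid; (4) $(a\to b)\wedge(a\to c)=a\to(b\wedge c)$; (5) $(a\to c)\wedge(b\to c)=(a\vee b)\to c$; (6) $a\to a=1$; (7) $(a\vee b)\cdot c=(a\cdot c)\vee(b\cdot c)$; (8) $(a\to b)\cdot(b\to c)\le a\to c$; (9) $a\to b\le (a\cdot c)\to(b\cdot c)$. Notation: $x^0=1$, $x^{m}=x\cdot x^{m-1}$; $\square(x)=1\to x$, $\square^0(x)=x$, $\square^{m}$ the $m$-fold iterate; $x\leftrightarrow y=(x\to y)\wedge(y\to x)$; $t_n(a,b)=\square^0(a\leftrightarrow b)\wedge\square(a\leftrightarrow b)\wedge\cdots\wedge\square^n(a\leftrightarrow b)$; $t_n^k(a,b)=(t_n(a,b))^k$. $R(a,b)$ is the binary relation on $A$ with $(c,d)\in R(a,b)$ iff there exist natural numbers $n,k$ such that (C1) $t_n^k(a,b)\cdot(c\wedge a\wedge b)\le d\wedge a\wedge b$ and $t_n^k(a,b)\cdot(d\wedge a\wedge b)\le c\wedge a\wedge b$; (C2) $t_n^k(a,b)\cdot(c\vee a\vee b)\le d\vee a\vee b$ and $t_n^k(a,b)\cdot(d\vee a\vee b)\le c\vee a\vee b$; (C3) $t_n^k(a,b)\le c\leftrightarrow d$. *)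

theory Defs
  imports Main
begin

text \<open>A DLCMI: the lattice reduct is a distributive lattice with top element 1 (= top),
  given by the type class; the monoid product and the implication are locale parameters.\<close>

locale dlcmi =
  fixes mult :: "'a::{distrib_lattice,order_top} \<Rightarrow> 'a \<Rightarrow> 'a" (infixl "\<cdot>" 70)
    and imp :: "'a \<Rightarrow> 'a \<Rightarrow> 'a" (infixr "\<rightharpoonup>" 60)
  assumes mult_assoc: "(x \<cdot> y) \<cdot> z = x \<cdot> (y \<cdot> z)"
    and mult_commute: "x \<cdot> y = y \<cdot> x"
    and mult_one: "x \<cdot> top = x"
    and imp_inf: "inf (a \<rightharpoonup> b) (a \<rightharpoonup> c) = a \<rightharpoonup> inf b c"
    and imp_sup: "inf (a \<rightharpoonup> c) (b \<rightharpoonup> c) = sup a b \<rightharpoonup> c"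
    and imp_refl: "a \<rightharpoonup> a = top"
    and mult_sup: "sup a b \<cdot> c = sup (a \<cdot> c) (b \<cdot> c)"
    and imp_trans: "(a \<rightharpoonup> b) \<cdot> (b \<rightharpoonup> c) \<le> a \<rightharpoonup> c"
    and imp_mult: "a \<rightharpoonup> b \<le> (a \<cdot> c) \<rightharpoonup> (b \<cdot> c)"
begin

primrec mpow :: "'a \<Rightarrow> nat \<Rightarrow> 'a" where
  "mpow x 0 = top"
| "mpow x (Suc m) = x \<cdot> mpow x m"

definition box :: "'a \<Rightarrow> 'a" where
  "box x = top \<rightharpoonup> x"

definition biimp :: "'a \<Rightarrow> 'a \<Rightarrow> 'a" where
  "biimp x y = inf (x \<rightharpoonup> y) (y \<rightharpoonup> x)"

primrec t :: "nat \<Rightarrow> 'a \<Rightarrow> 'a \<Rightarrow> 'a" where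
  "t 0 a b = biimp a b"
| "t (Suc n) a b = inf (t n a b) ((box ^^ Suc n) (biimp a b))"

definition tk :: "nat \<Rightarrow> nat \<Rightarrow> 'a \<Rightarrow> 'a \<Rightarrow> 'a" where
  "tk n k a b = mpow (t n a b) k"

definition R :: "'a \<Rightarrow> 'a \<Rightarrow> ('a \<times> 'a) set" where
  "R a b = {(c, d). \<exists>n k.
      tk n k a b \<cdot> inf (inf c a) b \<le> inf (inf d a) b \<and>
      tk n k a b \<cdot> inf (inf d a) b \<le> inf (inf c a) b \<and>
      tk n k a b \<cdot> sup (sup c a) b \<le> sup (sup d a) b \<and>
      tk n k a b \<cdot> sup (sup d a) b \<le> sup (sup c a) b \<and>
      tk n k a b \<le> biimp c d}"

end

end

theory Submission
  imports Defs
begin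

context dlcmi
begin

lemma mult_mono_l:
  assumes "x \<le> y" shows "x \<cdot> c \<le> y \<cdot> c"
proof -
  have e: "sup x y = y" using assms by (rule sup.absorb2)
  have "x \<cdot> c \<le> sup (x \<cdot> c) (y \<cdot> c)" by (rule sup.cobounded1)
  also have "\<dots> = sup x y \<cdot> c" by (rule mult_sup[symmetric])
  also have "\<dots> = y \<cdot> c" by (simp only: e)
  finally show ?thesis .
qed

lemma mult_mono2: "x \<le> y \<Longrightarrow> z \<le> v \<Longrightarrow> x \<cdot> z \<le> y \<cdot> v"
proof -
  assume "x \<le> y" "z \<le> v"
  have "x \<cdot> z \<le> y \<cdot> z" by (rule mult_mono_l) fact
  also have "\<dots> = z \<cdot> y" by (rule mult_commute)
  also have "\<dots> \<le> v \<cdot> y" by (rule mult_mono_l) fact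
  also have "\<dots> = y \<cdot> v" by (rule mult_commute)
  finally show ?thesis .
qed

lemma mult_le: "x \<cdot> y \<le> x"
proof -
  have "x \<cdot> y \<le> x \<cdot> top" by (rule mult_mono2[OF order_refl top_greatest])
  then show ?thesis by (simp only: mult_one)
qed

lemma imp_mono_r: assumes "b \<le> c" shows "a \<rightharpoonup> b \<le> a \<rightharpoonup> c"
proof -
  have e: "inf b c = b" using assms by (rule inf.absorb1)
  have "a \<rightharpoonup> b = a \<rightharpoonup> inf b c" by (simp only: e)
  also have "\<dots> = inf (a \<rightharpoonup> b) (a \<rightharpoonup> c)" by (rule imp_inf[symmetric])
  also have "\<dots> \<le> a \<rightharpoonup> c" by (rule inf.cobounded2)
  finally show ?thesis .
qed

lemma imp_anti_l: assumes "a \<le> b" shows "b \<rightharpoonup> c \<le> a \<rightharpoonup> c"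
proof -
  have e: "sup a b = b" using assms by (rule sup.absorb2)
  have "b \<rightharpoonup> c = sup a b \<rightharpoonup> c" by (simp only: e)
  also have "\<dots> = inf (a \<rightharpoonup> c) (b \<rightharpoonup> c)" by (rule imp_sup[symmetric])
  also have "\<dots> \<le> a \<rightharpoonup> c" by (rule inf.cobounded1)
  finally show ?thesis .
qed

lemma top_mult: "top \<cdot> x = x"
proof -
  have "top \<cdot> x = x \<cdot> top" by (rule mult_commute)
  then show ?thesis by (simp only: mult_one)
qed

lemma mpow_add: "mpow x (m + n) = mpow x m \<cdot> mpow x n"
  by (induction m) (simp_all add: top_mult mult_assoc)

lemma mpow_mono: "x \<le> y \<Longrightarrow> mpow x k \<le> mpow y k"
  by (induction k) (simp_all add: mult_mono2)

lemma mpow_anti: "mpow x (m + n) \<le> mpow x m"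
  by (simp add: mpow_add mult_le)

lemma t_anti: "m \<le> n \<Longrightarrow> t n a b \<le> t m a b"
proof (induction n)
  case 0 then show ?case by simp
next
  case (Suc n)
  show ?case
  proof (cases "m \<le> n")
    case True
    have "t (Suc n) a b \<le> t n a b" by simp
    also have "\<dots> \<le> t m a b" using Suc.IH True .
    finally show ?thesis .
  next
    case False
    then have "m = Suc n" using Suc.prems by simp
    then show ?thesis by simp
  qed
qed

lemma box_inf: "box (inf x y) = inf (box x) (box y)"
  by (simp add: box_def imp_inf)

lemma box_mono: "x \<le> y \<Longrightarrow> box x \<le> box y"
  by (simp add: box_def imp_mono_r)


lemma box_mult: "box x \<cdot> box y \<le> box (x \<cdot> y)"
proof -
  have "box x \<le> y \<rightharpoonup> (x \<cdot> y)"
    using imp_mult[of top x y] by (simp add: box_def top_mult)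
  then have "box x \<cdot> box y \<le> (y \<rightharpoonup> (x \<cdot> y)) \<cdot> box y" by (rule mult_mono_l)
  also have "\<dots> = (top \<rightharpoonup> y) \<cdot> (y \<rightharpoonup> (x \<cdot> y))" by (simp add: box_def mult_commute)
  also have "\<dots> \<le> box (x \<cdot> y)" unfolding box_def by (rule imp_trans)
  finally show ?thesis .
qed

lemma box_top: "box top = top"
  by (simp add: box_def imp_refl)

lemma box_mpow: "mpow (box x) k \<le> box (mpow x k)"
proof (induction k)
  case 0 then show ?case by (simp add: box_top)
next
  case (Suc k)
  have "mpow (box x) (Suc k) \<le> box x \<cdot> box (mpow x k)"
    using Suc by (simp add: mult_mono2)
  also have "\<dots> \<le> box (mpow x (Suc k))" by (simp add: box_mult)
  finally show ?case .
qed

lemma t_Suc_box: "t (Suc n) a b \<le> box (t n a b)"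
proof (induction n)
  case 0 then show ?case by simp
next
  case (Suc n)
  have "t (Suc (Suc n)) a b = inf (t (Suc n) a b) (box ((box ^^ Suc n) (biimp a b)))"
    by simp
  also have "\<dots> \<le> inf (box (t n a b)) (box ((box ^^ Suc n) (biimp a b)))"
    by (rule inf_mono[OF Suc.IH order_refl])
  also have "\<dots> = box (t (Suc n) a b)" by (simp add: box_inf)
  finally show ?case .
qed

lemma box_imp: "T \<cdot> x \<le> y \<Longrightarrow> box T \<le> x \<rightharpoonup> y"
proof -
  assume h: "T \<cdot> x \<le> y"
  have "box T \<le> (top \<cdot> x) \<rightharpoonup> (T \<cdot> x)" unfolding box_def by (rule imp_mult)
  also have "\<dots> = x \<rightharpoonup> (T \<cdot> x)" by (simp only: top_mult)
  also have "\<dots> \<le> x \<rightharpoonup> y" using h by (rule imp_mono_r)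
  finally show ?thesis .
qed

lemma key:
  assumes "T \<le> d \<rightharpoonup> c" "T \<le> u \<rightharpoonup> w"
  shows "(T \<cdot> T) \<cdot> (c \<rightharpoonup> u) \<le> d \<rightharpoonup> w"
proof -
  have "(T \<cdot> (c \<rightharpoonup> u)) \<cdot> T = T \<cdot> ((c \<rightharpoonup> u) \<cdot> T)" by (rule mult_assoc)
  also have "\<dots> = T \<cdot> (T \<cdot> (c \<rightharpoonup> u))" by (simp only: mult_commute[of "c \<rightharpoonup> u" T])
  also have "\<dots> = (T \<cdot> T) \<cdot> (c \<rightharpoonup> u)" by (rule mult_assoc[symmetric])
  finally have "(T \<cdot> T) \<cdot> (c \<rightharpoonup> u) = (T \<cdot> (c \<rightharpoonup> u)) \<cdot> T" by (rule sym)
  also have "\<dots> \<le> ((d \<rightharpoonup> c) \<cdot> (c \<rightharpoonup> u)) \<cdot> (u \<rightharpoonup> w)"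
    using assms by (simp add: mult_mono2)
  also have "\<dots> \<le> (d \<rightharpoonup> u) \<cdot> (u \<rightharpoonup> w)"
    by (simp add: imp_trans mult_mono_l)
  also have "\<dots> \<le> d \<rightharpoonup> w" by (rule imp_trans)
  finally show ?thesis .
qed

lemma main:
  assumes "(c, d) \<in> R a b" and "(u, w) \<in> R a b"
  shows "\<exists>n k.
    tk n (2 * k) a b \<cdot> (c \<rightharpoonup> u) \<le> d \<rightharpoonup> w \<and>
    tk n (2 * k) a b \<cdot> (inf (inf (c \<rightharpoonup> u) a) b) \<le> inf (inf (d \<rightharpoonup> w) a) b \<and>
    tk n (2 * k) a b \<cdot> (inf (inf (d \<rightharpoonup> w) a) b) \<le> inf (inf (c \<rightharpoonup> u) a) b \<and>
    tk n (2 * k) a b \<cdot> (sup (sup (c \<rightharpoonup> u) a) b) \<le> sup (sup (d \<rightharpoonup> w) a) b \<and>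
    tk n (2 * k) a b \<cdot> (sup (sup (d \<rightharpoonup> w) a) b) \<le> sup (sup (c \<rightharpoonup> u) a) b \<and>
    tk (Suc n) (2 * k) a b \<le> biimp (c \<rightharpoonup> u) (d \<rightharpoonup> w)"
proof -
  obtain n1 k1 where h1: "tk n1 k1 a b \<le> biimp c d"
    using assms(1) unfolding R_def by blast
  obtain n2 k2 where h2: "tk n2 k2 a b \<le> biimp u w"
    using assms(2) unfolding R_def by blast
  define n where "n = n1 + n2"
  define K where "K = k1 + k2"
  define T where "T = mpow (t n a b) K"
  have "T \<le> mpow (t n1 a b) K" unfolding T_def n_def by (simp add: mpow_mono t_anti)
  also have "\<dots> \<le> mpow (t n1 a b) k1" unfolding K_def by (rule mpow_anti)
  finally have T1: "T \<le> biimp c d" using h1 unfolding tk_def by simp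
  have "T \<le> mpow (t n2 a b) K" unfolding T_def n_def by (simp add: mpow_mono t_anti)
  also have "\<dots> \<le> mpow (t n2 a b) k2" unfolding K_def by (subst add.commute) (rule mpow_anti)
  finally have T2: "T \<le> biimp u w" using h2 unfolding tk_def by simp
  have TT: "tk n (2 * K) a b = T \<cdot> T" unfolding tk_def T_def
    by (simp only: mult_2 mpow_add)
  have E1: "tk n (2 * K) a b \<cdot> (c \<rightharpoonup> u) \<le> d \<rightharpoonup> w"
    unfolding TT by (rule key) (use T1 T2 in \<open>simp_all add: biimp_def\<close>)
  have E2: "tk n (2 * K) a b \<cdot> (d \<rightharpoonup> w) \<le> c \<rightharpoonup> u"
    unfolding TT by (rule key) (use T1 T2 in \<open>simp_all add: biimp_def\<close>)
  have I: "tk n (2 * K) a b \<cdot> (inf (inf x a) b) \<le> inf (inf y a) b"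
    if "tk n (2 * K) a b \<cdot> x \<le> y" for x y
  proof -
    have "inf (inf x a) b \<le> x" by (rule order_trans[OF inf_le1 inf_le1])
    then have "tk n (2 * K) a b \<cdot> (inf (inf x a) b) \<le> tk n (2 * K) a b \<cdot> x"
      by (rule mult_mono2[OF order_refl])
    then have z1: "tk n (2 * K) a b \<cdot> (inf (inf x a) b) \<le> y" using that by (rule order_trans)
    have z2: "tk n (2 * K) a b \<cdot> (inf (inf x a) b) \<le> inf (inf x a) b"
      by (subst mult_commute) (rule mult_le)
    show ?thesis using z1 z2 by simp
  qed
  have S: "tk n (2 * K) a b \<cdot> (sup (sup x a) b) \<le> sup (sup y a) b"
    if "tk n (2 * K) a b \<cdot> x \<le> y" for x y
  proof -
    let ?P = "tk n (2 * K) a b"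
    have "?P \<cdot> (sup (sup x a) b) = sup (sup (?P \<cdot> x) (?P \<cdot> a)) (?P \<cdot> b)"
      by (simp only: mult_commute[of ?P] mult_sup)
    moreover have "?P \<cdot> a \<le> a" "?P \<cdot> b \<le> b" by (subst mult_commute, rule mult_le)+
    ultimately show ?thesis using that
      by (simp add: le_supI1 le_supI2 sup.coboundedI1 sup_mono)
  qed
  have B: "tk (Suc n) (2 * K) a b \<le> box (tk n (2 * K) a b)"
    unfolding tk_def by (rule order_trans[OF mpow_mono[OF t_Suc_box] box_mpow])
  have "tk (Suc n) (2 * K) a b \<le> biimp (c \<rightharpoonup> u) (d \<rightharpoonup> w)"
    unfolding biimp_def
    by (rule le_infI) (rule order_trans[OF B box_imp[OF E1]], rule order_trans[OF B box_imp[OF E2]])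
  then show ?thesis using E1 E2 I[OF E1] I[OF E2] S[OF E1] S[OF E2]
    by (intro exI[of _ n] exI[of _ K] conjI)
qed

end

theorem lemma3p8:
  fixes mult :: "'a::{distrib_lattice,order_top} \<Rightarrow> 'a \<Rightarrow> 'a"
    and imp :: "'a \<Rightarrow> 'a \<Rightarrow> 'a"
    and a b c d u w :: 'a
  assumes "dlcmi mult imp"
    and "(c, d) \<in> dlcmi.R mult imp a b"
    and "(u, w) \<in> dlcmi.R mult imp a b"
  shows "\<exists>n k.
    mult (dlcmi.tk mult imp n (2 * k) a b) (imp c u) \<le> imp d w \<and>
    mult (dlcmi.tk mult imp n (2 * k) a b) (inf (inf (imp c u) a) b) \<le> inf (inf (imp d w) a) b \<and>
    mult (dlcmi.tk mult imp n (2 * k) a b) (inf (inf (imp d w) a) b) \<le> inf (inf (imp c u) a) b \<and>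
    mult (dlcmi.tk mult imp n (2 * k) a b) (sup (sup (imp c u) a) b) \<le> sup (sup (imp d w) a) b \<and>
    mult (dlcmi.tk mult imp n (2 * k) a b) (sup (sup (imp d w) a) b) \<le> sup (sup (imp c u) a) b \<and>
    dlcmi.tk mult imp (Suc n) (2 * k) a b \<le> dlcmi.biimp imp (imp c u) (imp d w)"
  using dlcmi.main[OF assms] .

end
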